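(* Let $n,m \in \mathbb{N}$, $a \in \Delta_n^+$, $b \in \Delta_m^+$, $\lambda > 0$, and let $g \colon \mathbb{R}^{n\times m} \to \mathbb{R}$ be a function whose gradient $\nabla g$ exists. Define $T_\lambda \colon \mathbb{R}^{n\times m} \to \Pi_{a,b}^+$ by $T_\lambda = \Phi_\lambda \circ \nabla g$, i.e. \[ T_\lambda(A) = \operatorname{argmin}_{\pi \in \Pi_{a,b}} \big(\langle \nabla g(A), \pi\rangle + \lambda h(\pi)\big) \quad \forall A \in \mathbb{R}^{n\times m}. \] If $g$ is convex, then the problem $\min_{\pi \in \Pi_{a,b}} \big(g(\pi) + \lambda h(\pi)\big)$ admits a unique minimizer $\pi^\star$, this minimizer lies in $\Pi_{a,b}^+$, and $\pi^\star$ is the unique fixed point of $T_\lambda$, i.e. $\pi^\star = T_\lambda(\pi^\star)$ and $T_\lambda$ has no other fixed point.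
   Context: $\Delta_n^+ := \{a \in \mathbb{R}^n : a_i > 0\ \forall i,\ \sum_i a_i = 1\}$. $\Pi_{a,b} := \{\pi \in \mathbb{R}_+^{n\times m} : \pi 1_m = a,\ \pi^\top 1_n = b\}$ (couplings), and $\Pi_{a,b}^+ := \{\pi \in \Pi_{a,b} : \pi_{ij} > 0\ \forall i,j\}$. $h(\pi) := \sum_{i,j} \pi_{ij}\log\frac{\pi_{ij}}{e}$ (with $0\log 0 = 0$) is the entropy function. $\langle A, B\rangle = \mathrm{tr}(A^\top B)$ is the Frobenius inner product. For $C \in \mathbb{R}^{n\times m}$, $\Phi_\lambda(C) := \operatorname{argmin}_{\pi \in \Pi_{a,b}} (\langle C,\pi\rangle + \lambda h(\pi))$, which is a well-defined (unique) element of $\Pi_{a,b}^+$. *)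

theory Defs
  imports "HOL-Analysis.Analysis"
begin

text \<open>Matrices in R^{n x m} are rendered as real^'m^'n (rows indexed by 'n, columns by 'm).
  The inner product on this type is exactly the Frobenius inner product.\<close>

definition simplex_pos :: "(real^'k) set" where
  "simplex_pos = {a. (\<forall>i. a $ i > 0) \<and> (\<Sum>i\<in>UNIV. a $ i) = 1}"

definition couplings :: "real^'n \<Rightarrow> real^'m \<Rightarrow> (real^'m^'n) set" where
  "couplings a b = {p. (\<forall>i j. p $ i $ j \<ge> 0) \<and>
      (\<forall>i. (\<Sum>j\<in>UNIV. p $ i $ j) = a $ i) \<and> (\<forall>j. (\<Sum>i\<in>UNIV. p $ i $ j) = b $ j)}"

definition couplings_pos :: "real^'n \<Rightarrow> real^'m \<Rightarrow> (real^'m^'n) set" where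
  "couplings_pos a b = {p \<in> couplings a b. \<forall>i j. p $ i $ j > 0}"

definition xlogx_e :: "real \<Rightarrow> real" where
  "xlogx_e x = (if x = 0 then 0 else x * ln (x / exp 1))"

definition entropy :: "real^'m^'n \<Rightarrow> real" where
  "entropy p = (\<Sum>i\<in>UNIV. \<Sum>j\<in>UNIV. xlogx_e (p $ i $ j))"

definition Phi :: "real^'n \<Rightarrow> real^'m \<Rightarrow> real \<Rightarrow> real^'m^'n \<Rightarrow> real^'m^'n" where
  "Phi a b lam C = (THE p. p \<in> couplings a b \<and>
      (\<forall>q\<in>couplings a b. C \<bullet> p + lam * entropy p \<le> C \<bullet> q + lam * entropy q))"

end

theory Submission
  imports Defs
begin


lemma xl_pos: "x > 0 \<Longrightarrow> xlogx_e x = x * ln x - x"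
  by (simp add: xlogx_e_def ln_div algebra_simps)

lemma xl_tangent_aux:
  assumes m: "m > 0" and x: "x \<ge> 0"
  shows "xlogx_e x \<ge> xlogx_e m + ln m * (x - m) \<and> (x \<noteq> m \<longrightarrow> xlogx_e x > xlogx_e m + ln m * (x - m))"
proof (cases "x = 0")
  case True
  then show ?thesis using m by (simp add: xl_pos xlogx_e_def[of 0] algebra_simps)
next
  case False
  then have xp: "x > 0" using x by simp
  have le: "ln m - ln x \<le> (m - x) / x" using ln_diff_le m xp by simp
  have le2: "x * (ln m - ln x) \<le> m - x" using mult_left_mono[OF le, of x] xp by simp
  have lt: "x \<noteq> m \<Longrightarrow> x * (ln m - ln x) < m - x"
  proof -
    assume "x \<noteq> m"
    then have "ln m - ln x < (m - x) / x" using ln_diff_less m xp by simp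
    then show ?thesis using mult_strict_left_mono[of _ _ x] xp by (simp add: field_simps)
  qed
  show ?thesis using le2 lt xp m by (simp add: xl_pos algebra_simps)
qed

lemma xl_conv:
  assumes x: "x \<ge> 0" and y: "y \<ge> 0" and t: "0 \<le> t" "t \<le> 1"
  shows "xlogx_e (x + t*(y-x)) \<le> xlogx_e x + t*(xlogx_e y - xlogx_e x)"
proof -
  define m where "m = x + t*(y-x)"
  have meq: "m = (1-t)*x + t*y" unfolding m_def by (simp add: algebra_simps)
  have a1: "(1-t)*x \<ge> 0" using x t by simp
  have a2: "t*y \<ge> 0" using y t by simp
  have m0: "m \<ge> 0" using meq a1 a2 by linarith
  show ?thesis
  proof (cases "m = 0")
    case True
    show ?thesis
    proof (cases "t = 0 \<or> t = 1")
      case True then show ?thesis by auto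
    next
      case False
      then have tt: "0 < t" "t < 1" using t by auto
      have "(1-t)*x = 0" "t*y = 0" using meq a1 a2 \<open>m=0\<close> by linarith+
      then have "x = 0 \<and> y = 0" using tt by simp
      then show ?thesis by simp
    qed
  next
    case False
    then have mp: "m > 0" using m0 by simp
    have 1: "xlogx_e x \<ge> xlogx_e m + ln m * (x - m)" using xl_tangent_aux[OF mp x] by simp
    have 2: "xlogx_e y \<ge> xlogx_e m + ln m * (y - m)" using xl_tangent_aux[OF mp y] by simp
    have "(1-t) * xlogx_e x + t * xlogx_e y \<ge> (1-t) * (xlogx_e m + ln m * (x - m)) + t * (xlogx_e m + ln m * (y - m))"
      using mult_left_mono[OF 1, of "1-t"] mult_left_mono[OF 2, of t] t by linarith
    also have "(1-t) * (xlogx_e m + ln m * (x - m)) + t * (xlogx_e m + ln m * (y - m)) = xlogx_e m"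
      unfolding m_def by (simp add: algebra_simps)
    finally show ?thesis unfolding m_def by (simp add: algebra_simps)
  qed
qed

lemma xl_strict:
  assumes x: "x \<ge> 0" and y: "y \<ge> 0" and xy: "x \<noteq> y"
  shows "xlogx_e (x + (1/2)*(y-x)) < xlogx_e x + (1/2)*(xlogx_e y - xlogx_e x)"
proof -
  define m where "m = x + (1/2)*(y-x)"
  have "m = (x+y)/2" unfolding m_def by (simp add: field_simps)
  then have mp: "m > 0" using x y xy by simp
  have xm: "x \<noteq> m" using xy unfolding m_def by simp
  have 1: "xlogx_e x > xlogx_e m + ln m * (x - m)" using xl_tangent_aux[OF mp x] xm by simp
  have 2: "xlogx_e y \<ge> xlogx_e m + ln m * (y - m)" using xl_tangent_aux[OF mp y] by simp
  have "xlogx_e m + ln m * (x - m) + xlogx_e m + ln m * (y - m) = 2 * xlogx_e m"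
    unfolding m_def by (simp add: algebra_simps)
  then have "2*xlogx_e m < xlogx_e x + xlogx_e y" using 1 2 by linarith
  then show ?thesis unfolding m_def[symmetric] by (simp add: field_simps)
qed

lemma xl_scale: "t > 0 \<Longrightarrow> r > 0 \<Longrightarrow> xlogx_e (t * r) = t * xlogx_e r + t * r * ln t"
  by (simp add: xl_pos ln_mult algebra_simps)

lemma xl_cont: "continuous_on {0..} xlogx_e"
proof -
  have l0: "((\<lambda>x::real. x * ln x) \<longlongrightarrow> 0) (at_right 0)"
  proof -
    have "((\<lambda>y::real. - (ln y / y)) \<longlongrightarrow> 0) at_top"
      using tendsto_minus[OF ln_x_over_x_tendsto_0] by simp
    then have "((\<lambda>y::real. inverse y * ln (inverse y)) \<longlongrightarrow> 0) at_top"
      apply (rule Lim_transform_eventually)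
      by (auto simp: eventually_at_top_dense ln_inverse divide_inverse)
    then show ?thesis by (simp only: filterlim_at_right_to_top)
  qed
  have lim: "((\<lambda>x::real. x * ln x - x) \<longlongrightarrow> 0) (at_right 0)"
    using tendsto_diff[OF l0 tendsto_ident_at] by simp
  show ?thesis unfolding continuous_on_def
  proof (intro ballI)
    fix x :: real assume "x \<in> {0..}"
    show "(xlogx_e \<longlongrightarrow> xlogx_e x) (at x within {0..})"
    proof (cases "x = 0")
      case True
      have "(xlogx_e \<longlongrightarrow> 0) (at_right 0)"
        using lim by (rule Lim_transform_eventually) (auto simp: eventually_at_right_field xl_pos intro!: exI[of _ 1])
      then have "(xlogx_e \<longlongrightarrow> 0) (at 0 within {0<..})" .
      then have "(xlogx_e \<longlongrightarrow> 0) (at 0 within {0..})"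
        by (simp add: at_within_Ici_at_right)
      then show ?thesis using True by (simp add: xlogx_e_def)
    next
      case False
      then have xp: "x > 0" using \<open>x \<in> {0..}\<close> by simp
      have "((\<lambda>y. y * ln y - y) \<longlongrightarrow> x * ln x - x) (at x)"
        using xp by (intro tendsto_intros) auto
      then have t1: "((\<lambda>y. y * ln y - y) \<longlongrightarrow> xlogx_e x) (at x)" using xl_pos[OF xp] by simp
      have "\<forall>\<^sub>F y in at x. 0 < y" using order_tendstoD(1)[OF tendsto_ident_at xp] .
      then have ev: "\<forall>\<^sub>F y in at x. y * ln y - y = xlogx_e y"
        by (rule eventually_mono) (simp add: xl_pos)
      have "(xlogx_e \<longlongrightarrow> xlogx_e x) (at x)"
        using Lim_transform_eventually[OF t1 ev] .
      then show ?thesis by (rule tendsto_within_subset) auto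
    qed
  qed
qed



lemma prod_coupling:
  assumes a: "a \<in> simplex_pos" and b: "b \<in> simplex_pos"
  shows "(\<chi> i. \<chi> j. a$i * b$j) \<in> couplings_pos a b"
  using a b unfolding couplings_pos_def couplings_def simplex_pos_def
  by (auto simp: sum_distrib_left[symmetric] sum_distrib_right[symmetric] less_imp_le)

lemma couplings_compact:
  assumes a: "a \<in> simplex_pos"
  shows "compact (couplings a b)"
proof -
  have cl: "closed (couplings a b)" unfolding couplings_def
    by (intro closed_Collect_conj closed_Collect_all closed_Collect_le closed_Collect_eq continuous_intros)
  have "\<forall>p\<in>couplings a b. norm p \<le> 1"
  proof
    fix p assume p: "p \<in> couplings a b"
    have "norm p \<le> (\<Sum>i\<in>UNIV. norm (p$i))" unfolding norm_vec_def by (rule L2_set_le_sum) auto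
    also have "\<dots> \<le> (\<Sum>i\<in>UNIV. \<Sum>j\<in>UNIV. \<bar>p$i$j\<bar>)" by (intro sum_mono norm_le_l1_cart)
    also have "\<dots> = (\<Sum>i\<in>UNIV. a$i)" using p unfolding couplings_def by simp
    also have "\<dots> = 1" using a unfolding simplex_pos_def by simp
    finally show "norm p \<le> 1" .
  qed
  then have "bounded (couplings a b)" unfolding bounded_iff by blast
  then show ?thesis using cl compact_eq_bounded_closed by blast
qed

lemma couplings_seg:
  assumes p: "p \<in> couplings a b" and q: "q \<in> couplings a b" and t: "0 \<le> t" "t \<le> 1"
  shows "p + t *\<^sub>R (q - p) \<in> couplings a b"
proof -
  have "p$i$j + t*(q$i$j - p$i$j) \<ge> 0" for i j
  proof -
    have "p$i$j + t*(q$i$j - p$i$j) = (1-t)*p$i$j + t*q$i$j" by (simp add: algebra_simps)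
    moreover have "(1-t)*p$i$j \<ge> 0" "t*q$i$j \<ge> 0" using p q t unfolding couplings_def by auto
    ultimately show ?thesis by linarith
  qed
  then show ?thesis using p q unfolding couplings_def
    by (simp add: sum.distrib sum_subtractf sum_distrib_left[symmetric])
qed

lemma entropy_seg_rhs: "entropy p + t * (entropy q - entropy p) =
   (\<Sum>i\<in>UNIV. \<Sum>j\<in>UNIV. xlogx_e (p$i$j) + t * (xlogx_e (q$i$j) - xlogx_e (p$i$j)))"
  by (simp add: entropy_def sum.distrib sum_distrib_left right_diff_distrib sum_subtractf)

lemma entropy_conv:
  assumes p: "p \<in> couplings a b" and q: "q \<in> couplings a b" and t: "0 \<le> t" "t \<le> 1"
  shows "entropy (p + t *\<^sub>R (q - p)) \<le> entropy p + t * (entropy q - entropy p)"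
  unfolding entropy_seg_rhs unfolding entropy_def
  using p q t unfolding couplings_def
  by (auto intro!: sum_mono xl_conv)

lemma comp_seg: "(p + t *\<^sub>R (q - p))$i$j = p$i$j + t*(q$i$j - p$i$j)"
  by simp

lemma entropy_strict:
  assumes p: "p \<in> couplings a b" and q: "q \<in> couplings a b" and pq: "p \<noteq> q"
  shows "entropy (p + (1/2) *\<^sub>R (q - p)) < entropy p + (1/2) * (entropy q - entropy p)"
proof -
  obtain i0 j0 where ij: "p$i0$j0 \<noteq> q$i0$j0" using pq by (metis vec_eq_iff)
  have nn: "p$i$j \<ge> 0" "q$i$j \<ge> 0" for i j using p q unfolding couplings_def by auto
  have le: "xlogx_e (p$i$j + (1/2)*(q$i$j - p$i$j)) \<le> xlogx_e (p$i$j) + (1/2) * (xlogx_e (q$i$j) - xlogx_e (p$i$j))" for i j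
    by (rule xl_conv) (simp_all add: nn)
  have lt: "xlogx_e (p$i0$j0 + (1/2)*(q$i0$j0 - p$i0$j0)) < xlogx_e (p$i0$j0) + (1/2) * (xlogx_e (q$i0$j0) - xlogx_e (p$i0$j0))"
    by (rule xl_strict) (simp_all add: nn ij)
  show ?thesis
    unfolding entropy_seg_rhs unfolding entropy_def comp_seg
  proof (rule sum_strict_mono_ex1)
    show "\<forall>i\<in>UNIV. (\<Sum>j\<in>UNIV. xlogx_e (p$i$j + (1/2)*(q$i$j - p$i$j))) \<le>
        (\<Sum>j\<in>UNIV. xlogx_e (p$i$j) + (1/2) * (xlogx_e (q$i$j) - xlogx_e (p$i$j)))"
      using le by (intro ballI sum_mono) 
    show "\<exists>i\<in>UNIV. (\<Sum>j\<in>UNIV. xlogx_e (p$i$j + (1/2)*(q$i$j - p$i$j))) <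
        (\<Sum>j\<in>UNIV. xlogx_e (p$i$j) + (1/2) * (xlogx_e (q$i$j) - xlogx_e (p$i$j)))"
    proof (intro bexI[of _ i0] sum_strict_mono_ex1)
      show "\<forall>j\<in>UNIV. xlogx_e (p$i0$j + (1/2)*(q$i0$j - p$i0$j)) \<le>
         xlogx_e (p$i0$j) + (1/2) * (xlogx_e (q$i0$j) - xlogx_e (p$i0$j))"
        using le by blast
      show "\<exists>j\<in>UNIV. xlogx_e (p$i0$j + (1/2)*(q$i0$j - p$i0$j)) <
         xlogx_e (p$i0$j) + (1/2) * (xlogx_e (q$i0$j) - xlogx_e (p$i0$j))"
        using lt by blast
    qed simp_all
  qed simp
qed

lemma entropy_cont: "continuous_on (couplings a b) entropy"
  unfolding entropy_def
proof (intro continuous_on_sum)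
  fix i j
  show "continuous_on (couplings a b) (\<lambda>p. xlogx_e (p$i$j))"
    by (rule continuous_on_compose2[OF xl_cont]) (auto intro!: continuous_intros simp: couplings_def)
qed




lemma that_lemma: "(x::real) < y + (1/2) * (z - y) \<Longrightarrow> y \<le> z \<Longrightarrow> z \<le> y \<Longrightarrow> y \<le> x \<Longrightarrow> False"
  by (simp add: field_simps)

lemma exists_unique_min:
  assumes a: "a \<in> simplex_pos" and b: "b \<in> simplex_pos" and lam: "lam > 0"
    and fc: "continuous_on (couplings a b) f"
    and mid: "\<And>p q. p \<in> couplings a b \<Longrightarrow> q \<in> couplings a b \<Longrightarrow>
       f (p + (1/2) *\<^sub>R (q - p)) \<le> f p + (1/2) * (f q - f p)"
  shows "\<exists>!p. p \<in> couplings a b \<and> (\<forall>q\<in>couplings a b. f p + lam * entropy p \<le> f q + lam * entropy q)"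
proof -
  have ne: "couplings a b \<noteq> {}" using prod_coupling[OF a b] unfolding couplings_pos_def by blast
  have cF: "continuous_on (couplings a b) (\<lambda>p. f p + lam * entropy p)"
    by (intro continuous_intros fc entropy_cont)
  obtain p where p: "p \<in> couplings a b" "\<forall>q\<in>couplings a b. f p + lam * entropy p \<le> f q + lam * entropy q"
    using continuous_attains_inf[OF couplings_compact[OF a] ne cF] by blast
  show ?thesis
  proof (rule ex1I[of _ p])
    show "p \<in> couplings a b \<and> (\<forall>q\<in>couplings a b. f p + lam * entropy p \<le> f q + lam * entropy q)" using p by blast
  next
    fix q assume q: "q \<in> couplings a b \<and> (\<forall>r\<in>couplings a b. f q + lam * entropy q \<le> f r + lam * entropy r)"
    show "q = p"
    proof (rule ccontr)
      assume "q \<noteq> p"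
      then have pq: "p \<noteq> q" by simp
      define m where "m = p + (1/2) *\<^sub>R (q - p)"
      have mC: "m \<in> couplings a b" unfolding m_def using couplings_seg[of p a b q "1/2"] p q by simp
      have e1: "entropy m < entropy p + (1/2) * (entropy q - entropy p)"
        unfolding m_def using entropy_strict[OF p(1) _ pq] q by blast
      have f1: "f m \<le> f p + (1/2) * (f q - f p)" unfolding m_def using mid p q by blast
      have "lam * entropy m < lam * (entropy p + (1/2) * (entropy q - entropy p))"
        using e1 lam by simp
      then have "f m + lam * entropy m < f p + (1/2) * (f q - f p) + lam * (entropy p + (1/2) * (entropy q - entropy p))"
        using f1 by linarith
      also have "\<dots> = (f p + lam * entropy p) + (1/2) * ((f q + lam * entropy q) - (f p + lam * entropy p))"
        by (simp add: field_simps)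
      finally have "f m + lam * entropy m < (f p + lam * entropy p) + (1/2) * ((f q + lam * entropy q) - (f p + lam * entropy p))" .
      moreover have "f p + lam * entropy p \<le> f q + lam * entropy q" "f q + lam * entropy q \<le> f p + lam * entropy p"
        using p q by auto
      moreover have "f p + lam * entropy p \<le> f m + lam * entropy m" using p mC by blast
      ultimately show False
        using that_lemma[of "f m + lam * entropy m" "f p + lam * entropy p" "f q + lam * entropy q"] by blast
    qed
  qed
qed

lemma lin_exists_unique:
  assumes a: "a \<in> simplex_pos" and b: "b \<in> simplex_pos" and lam: "lam > 0"
  shows "\<exists>!p. p \<in> couplings a b \<and> (\<forall>q\<in>couplings a b. C \<bullet> p + lam * entropy p \<le> C \<bullet> q + lam * entropy q)"
  by (rule exists_unique_min[OF a b lam]) (auto intro!: continuous_intros simp: inner_simps algebra_simps)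

lemma Phi_char:
  assumes a: "a \<in> simplex_pos" and b: "b \<in> simplex_pos" and lam: "lam > 0"
  shows "Phi a b lam C \<in> couplings a b \<and> (\<forall>q\<in>couplings a b. C \<bullet> Phi a b lam C + lam * entropy (Phi a b lam C) \<le> C \<bullet> q + lam * entropy q)"
  unfolding Phi_def by (rule theI'[OF lin_exists_unique[OF a b lam]])

lemma Phi_unique:
  assumes a: "a \<in> simplex_pos" and b: "b \<in> simplex_pos" and lam: "lam > 0"
    and p: "p \<in> couplings a b" "\<forall>q\<in>couplings a b. C \<bullet> p + lam * entropy p \<le> C \<bullet> q + lam * entropy q"
  shows "Phi a b lam C = p"
  unfolding Phi_def by (rule the1_equality[OF lin_exists_unique[OF a b lam]]) (use p in blast)




lemma sum_if_single: "(\<Sum>i\<in>(UNIV::'n::finite set). \<Sum>j\<in>(UNIV::'m::finite set). (if i = i0 \<and> j = j0 then c else 0)) = (c::real)"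
proof -
  have "(\<Sum>i\<in>(UNIV::'n set). \<Sum>j\<in>(UNIV::'m set). (if i = i0 \<and> j = j0 then c else 0))
     = (\<Sum>i\<in>(UNIV::'n set). (if i = i0 then c else 0))"
    by (intro sum.cong refl) (auto simp: if_distrib)
  also have "\<dots> = c" by simp
  finally show ?thesis .
qed

lemma min_pos:
  assumes a: "a \<in> simplex_pos" and b: "b \<in> simplex_pos" and lam: "lam > 0"
    and p: "p \<in> couplings a b" "\<forall>q\<in>couplings a b. C \<bullet> p + lam * entropy p \<le> C \<bullet> q + lam * entropy q"
  shows "p \<in> couplings_pos a b"
proof (rule ccontr)
  assume "p \<notin> couplings_pos a b"
  then obtain i0 j0 where "\<not> p$i0$j0 > 0" using p(1) unfolding couplings_pos_def by auto
  then have p0: "p$i0$j0 = 0" using p(1) unfolding couplings_def by (metis (mono_tags, lifting) mem_Collect_eq order_less_le)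
  define r where "r = (\<chi> i. \<chi> j. a$i * b$j)"
  have rP: "r \<in> couplings_pos a b" unfolding r_def by (rule prod_coupling[OF a b])
  then have rC: "r \<in> couplings a b" and rpos: "\<And>i j. r$i$j > 0" unfolding couplings_pos_def by auto
  define r0 where "r0 = r$i0$j0"
  have r0: "r0 > 0" unfolding r0_def by (rule rpos)
  have pnn: "\<And>i j. p$i$j \<ge> 0" using p(1) unfolding couplings_def by auto
  have ent: "entropy (p + t *\<^sub>R (r - p)) \<le> entropy p + t * (entropy r - entropy p) + t * r0 * ln t"
    if t: "0 < t" "t \<le> 1" for t
  proof -
    have "entropy (p + t *\<^sub>R (r - p)) = (\<Sum>i\<in>UNIV. \<Sum>j\<in>UNIV. xlogx_e (p$i$j + t*(r$i$j - p$i$j)))"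
      unfolding entropy_def comp_seg ..
    also have "\<dots> \<le> (\<Sum>i\<in>UNIV. \<Sum>j\<in>UNIV. (xlogx_e (p$i$j) + t * (xlogx_e (r$i$j) - xlogx_e (p$i$j)))
         + (if i = i0 \<and> j = j0 then t * r0 * ln t else 0))"
    proof (intro sum_mono)
      fix i j
      show "xlogx_e (p$i$j + t*(r$i$j - p$i$j)) \<le> (xlogx_e (p$i$j) + t * (xlogx_e (r$i$j) - xlogx_e (p$i$j)))
         + (if i = i0 \<and> j = j0 then t * r0 * ln t else 0)"
      proof (cases "i = i0 \<and> j = j0")
        case True
        then show ?thesis using p0 xl_scale[OF t(1) r0] unfolding r0_def
          by (simp add: xlogx_e_def[of 0])
      next
        case False
        have "xlogx_e (p$i$j + t*(r$i$j - p$i$j)) \<le> xlogx_e (p$i$j) + t * (xlogx_e (r$i$j) - xlogx_e (p$i$j))"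
          by (rule xl_conv) (use pnn rpos t in \<open>auto intro: less_imp_le\<close>)
        then show ?thesis using False by (simp only: if_False)
      qed
    qed
    also have "\<dots> = entropy p + t * (entropy r - entropy p) + t * r0 * ln t"
      by (simp only: entropy_seg_rhs sum.distrib sum_if_single)
    finally show ?thesis .
  qed
  define K where "K = C \<bullet> (r - p) + lam * (entropy r - entropy p)"
  define t where "t = min (1/2) (exp (- (\<bar>K\<bar> + 1) / (lam * r0)))"
  have t0: "t > 0" and t1: "t \<le> 1" unfolding t_def by auto
  have "ln t \<le> ln (exp (- (\<bar>K\<bar> + 1) / (lam * r0)))" unfolding t_def
    using t0 t_def by (subst ln_le_cancel_iff) auto
  then have "ln t \<le> - (\<bar>K\<bar> + 1) / (lam * r0)" by simp
  then have "lam * r0 * ln t \<le> lam * r0 * (- (\<bar>K\<bar> + 1) / (lam * r0))"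
    using lam r0 by (intro mult_left_mono) auto
  then have lnt: "lam * r0 * ln t \<le> - (\<bar>K\<bar> + 1)" using lam r0 by simp
  define pt where "pt = p + t *\<^sub>R (r - p)"
  have ptC: "pt \<in> couplings a b" unfolding pt_def using couplings_seg[OF p(1) rC] t0 t1 by simp
  have "C \<bullet> pt + lam * entropy pt \<le> C \<bullet> p + t * (C \<bullet> (r - p)) + lam * (entropy p + t * (entropy r - entropy p) + t * r0 * ln t)"
    unfolding pt_def using ent[OF t0 t1] lam by (simp add: inner_simps)
  also have "\<dots> = C \<bullet> p + lam * entropy p + t * (K + lam * r0 * ln t)"
    unfolding K_def by (simp add: algebra_simps)
  also have "\<dots> < C \<bullet> p + lam * entropy p"
  proof -
    have "K + lam * r0 * ln t < 0" using lnt by linarith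
    then have "t * (K + lam * r0 * ln t) < 0" using t0 by (simp add: mult_pos_neg)
    then show ?thesis by linarith
  qed
  finally show False using p(2) ptC by fastforce
qed




lemma dir_lim:
  fixes g :: "'a::real_inner \<Rightarrow> real"
  assumes grad: "\<And>A. (g has_derivative (\<lambda>H. grad_g A \<bullet> H)) (at A)"
  shows "((\<lambda>t. (g (p + t *\<^sub>R d) - g p) / t) \<longlongrightarrow> grad_g p \<bullet> d) (at_right 0)"
proof -
  have 1: "((\<lambda>t::real. p + t *\<^sub>R d) has_derivative (\<lambda>t. t *\<^sub>R d)) (at 0)"
    by (auto intro!: derivative_eq_intros)
  have 2: "((\<lambda>t. g (p + t *\<^sub>R d)) has_derivative (\<lambda>t. grad_g p \<bullet> (t *\<^sub>R d))) (at 0)"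
    using has_derivative_compose[OF 1, of g "\<lambda>H. grad_g p \<bullet> H"] grad[of p] by simp
  have eq: "(\<lambda>t. grad_g p \<bullet> (t *\<^sub>R d)) = (\<lambda>t. (grad_g p \<bullet> d) * t)" by (auto simp: fun_eq_iff)
  have hd: "((\<lambda>t. g (p + t *\<^sub>R d)) has_real_derivative (grad_g p \<bullet> d)) (at 0)"
    using 2 unfolding has_field_derivative_def eq .
  then have "((\<lambda>t. (g (p + t *\<^sub>R d) - g p) / t) \<longlongrightarrow> grad_g p \<bullet> d) (at 0)"
    using has_field_derivative_iff[THEN iffD1, OF hd] by simp
  then show ?thesis by (rule tendsto_mono[OF at_le, rotated]) simp
qed

lemma var_min:
  assumes grad: "\<And>A. (g has_derivative (\<lambda>H. grad_g A \<bullet> H)) (at A)" and lam: "lam > 0"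
    and p: "p \<in> couplings a b" "\<forall>q\<in>couplings a b. g p + lam * entropy p \<le> g q + lam * entropy q"
  shows "\<forall>q\<in>couplings a b. grad_g p \<bullet> p + lam * entropy p \<le> grad_g p \<bullet> q + lam * entropy q"
proof (intro ballI, rule ccontr)
  fix q assume qC: "q \<in> couplings a b"
    and nle: "\<not> grad_g p \<bullet> p + lam * entropy p \<le> grad_g p \<bullet> q + lam * entropy q"
  define d where "d = q - p"
  define e where "e = grad_g p \<bullet> d + lam * (entropy q - entropy p)"
  have e0: "e < 0" using nle unfolding e_def d_def by (simp add: inner_diff_right algebra_simps)
  have "\<forall>\<^sub>F t in at_right 0. (g (p + t *\<^sub>R d) - g p) / t < grad_g p \<bullet> d - e/2"
    using order_tendstoD(2)[OF dir_lim[OF grad, of p d]] e0 by simp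
  then obtain bnd :: real where bnd: "bnd > 0" "\<And>t. t > 0 \<Longrightarrow> t < bnd \<Longrightarrow> (g (p + t *\<^sub>R d) - g p) / t < grad_g p \<bullet> d - e/2"
    unfolding eventually_at_right_field by auto
  define t where "t = min (bnd/2) (1/2)"
  have t0: "t > 0" and tb: "t < bnd" and t1: "t \<le> 1" unfolding t_def using bnd by auto
  have "(g (p + t *\<^sub>R d) - g p) / t < grad_g p \<bullet> d - e/2" using bnd(2)[OF t0 tb] .
  then have gq: "g (p + t *\<^sub>R d) - g p < t * (grad_g p \<bullet> d - e/2)"
    using t0 by (simp add: pos_divide_less_eq mult.commute)
  have ent: "entropy (p + t *\<^sub>R d) \<le> entropy p + t * (entropy q - entropy p)"
    unfolding d_def using entropy_conv[OF p(1) qC] t0 t1 by simp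
  have lent: "lam * entropy (p + t *\<^sub>R d) \<le> lam * (entropy p + t * (entropy q - entropy p))"
    using mult_left_mono[OF ent, of lam] lam by simp
  have ptC: "p + t *\<^sub>R d \<in> couplings a b" unfolding d_def using couplings_seg[OF p(1) qC] t0 t1 by simp
  have "g (p + t *\<^sub>R d) + lam * entropy (p + t *\<^sub>R d) < g p + t * (grad_g p \<bullet> d - e/2) + lam * (entropy p + t * (entropy q - entropy p))"
    using gq lent by linarith
  also have "\<dots> = g p + lam * entropy p + t * e / 2" unfolding e_def by (simp add: field_simps)
  also have "\<dots> < g p + lam * entropy p" using t0 e0 by (simp add: mult_pos_neg)
  finally show False using p(2) ptC by fastforce
qed

lemma tangent:
  fixes g :: "'a::real_inner \<Rightarrow> real"
  assumes grad: "\<And>A. (g has_derivative (\<lambda>H. grad_g A \<bullet> H)) (at A)" and cvx: "convex_on UNIV g"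
  shows "g A + grad_g A \<bullet> (q - A) \<le> g q"
proof -
  have "\<forall>\<^sub>F t in at_right 0. (g (A + t *\<^sub>R (q - A)) - g A) / t \<le> g q - g A"
    unfolding eventually_at_right_field
  proof (intro exI[of _ 1] conjI allI impI)
    fix t :: real assume t: "t > 0" "t < 1"
    have "g (A + t *\<^sub>R (q - A)) = g ((1 - t) *\<^sub>R A + t *\<^sub>R q)" by (simp add: algebra_simps)
    also have "\<dots> \<le> (1 - t) * g A + t * g q" using convex_onD[OF cvx, of t A q] t by simp
    finally have "g (A + t *\<^sub>R (q - A)) - g A \<le> t * (g q - g A)" by (simp add: algebra_simps)
    then show "(g (A + t *\<^sub>R (q - A)) - g A) / t \<le> g q - g A" using t by (simp add: pos_divide_le_eq mult.commute)
  qed simp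
  then have "grad_g A \<bullet> (q - A) \<le> g q - g A"
    using tendsto_le[OF trivial_limit_at_right_real tendsto_const dir_lim[OF grad]] by blast
  then show ?thesis by simp
qed

theorem proposition2:
  fixes a :: "real^'n" and b :: "real^'m" and lam :: real
    and g :: "real^'m^'n \<Rightarrow> real" and grad_g :: "real^'m^'n \<Rightarrow> real^'m^'n"
  assumes a: "a \<in> simplex_pos" and b: "b \<in> simplex_pos" and lam: "lam > 0"
    and grad: "\<And>A. (g has_derivative (\<lambda>H. grad_g A \<bullet> H)) (at A)"
    and cvx: "convex_on UNIV g"
  shows "(\<exists>!p. p \<in> couplings a b \<and>
           (\<forall>q\<in>couplings a b. g p + lam * entropy p \<le> g q + lam * entropy q))
       \<and> (\<forall>p. (p \<in> couplings a b \<and>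
           (\<forall>q\<in>couplings a b. g p + lam * entropy p \<le> g q + lam * entropy q))
         \<longrightarrow> p \<in> couplings_pos a b \<and> Phi a b lam (grad_g p) = p
             \<and> (\<forall>A. Phi a b lam (grad_g A) = A \<longrightarrow> A = p))"
proof -
  have gc: "continuous_on (couplings a b) g"
    using grad has_derivative_continuous continuous_at_imp_continuous_on by blast
  have EU: "\<exists>!p. p \<in> couplings a b \<and>
           (\<forall>q\<in>couplings a b. g p + lam * entropy p \<le> g q + lam * entropy q)"
  proof (rule exists_unique_min[OF a b lam gc])
    fix p q :: "real^'m^'n"
    have "g (p + (1/2) *\<^sub>R (q - p)) = g ((1 - 1/2) *\<^sub>R p + (1/2) *\<^sub>R q)"
      by (simp only: scaleR_left_diff_distrib scaleR_one scaleR_right_diff_distrib) (simp add: algebra_simps)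
    also have "\<dots> \<le> (1 - 1/2) * g p + (1/2) * g q" using convex_onD[OF cvx, of "1/2" p q] by simp
    finally show "g (p + (1/2) *\<^sub>R (q - p)) \<le> g p + (1/2) * (g q - g p)" by (simp add: field_simps)
  qed
  show ?thesis
  proof (intro conjI EU allI impI)
    fix p assume pm: "p \<in> couplings a b \<and> (\<forall>q\<in>couplings a b. g p + lam * entropy p \<le> g q + lam * entropy q)"
    have lin: "\<forall>q\<in>couplings a b. grad_g p \<bullet> p + lam * entropy p \<le> grad_g p \<bullet> q + lam * entropy q"
      using var_min[OF grad lam] pm by blast
    show "p \<in> couplings_pos a b" using min_pos[OF a b lam] pm lin by blast
    show "Phi a b lam (grad_g p) = p" using Phi_unique[OF a b lam] pm lin by blast
    fix A assume fxp: "Phi a b lam (grad_g A) = A"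
    have AC: "A \<in> couplings a b"
      and Am: "\<forall>q\<in>couplings a b. grad_g A \<bullet> A + lam * entropy A \<le> grad_g A \<bullet> q + lam * entropy q"
      using Phi_char[OF a b lam, of "grad_g A"] fxp by auto
    have "\<forall>q\<in>couplings a b. g A + lam * entropy A \<le> g q + lam * entropy q"
    proof
      fix q assume qC: "q \<in> couplings a b"
      have "g A + grad_g A \<bullet> (q - A) \<le> g q" by (rule tangent[OF grad cvx])
      moreover have "grad_g A \<bullet> A + lam * entropy A \<le> grad_g A \<bullet> q + lam * entropy q" using Am qC by blast
      ultimately show "g A + lam * entropy A \<le> g q + lam * entropy q" by (simp add: inner_diff_right)
    qed
    then show "A = p" using EU AC pm by blast
  qed
qed


end
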